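(* Let $Q=(V,E)$ be a natural join query over binary relations, and let $I$ be an instance in which every relation has at most $N\ge1$ tuples. Let $U\subset V$. Suppose: (1) for every attribute $Y\in V\setminus U$ there is a relation $R(X,Y)\in E$ with $X\in U$; (2) every relation $R(X,Y)\in E$ with $X\in U$ and $Y\in V\setminus U$ is light in $X$ in $I$. Let $T$ be the relation obtained by computing $Q_U(I)$ and then joining it with all relations $R(X,Y)^I$ with $X\in U$, $Y\in V\setminus U$. Equivalently, $T$ is the natural join of all relations of $I$ having at least one attribute in $U$. Then $|T|\le\mathrm{AGM}(Q)$.
   Context: A natural join query over binary relations consists of relation symbols, each having exactly two distinct attributes; relations are sets of tuples. The query graph $(V,E)$ has one vertex per attribute and one edge per relation. For a relation $R$ with attribute $X$ and a value $a$, the degree is $d_R(a)=|\{t\in R:t.X=a\}|$. $R$ is light in $X$ if $d_R(a)\le\sqrt N$ for all $a$. For $U\subseteq V$, the induced subgraph query $Q_U$ consists of the projections $\pi_U R$ of all relations $R$ having at least one attribute in $U$. A fractional vertex packing is a map $u:V\to[0,1]$ with $u_x+u_y\le1$ for every edge $\{x,y\}\in E$. Define $\mathrm{AGM}(Q)=\max_u N^{\sum_{x\in V}u_x}$, the maximum taken over fractional vertex packings $u$. *)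

theory Defs
  imports Complex_Main "HOL-Library.FuncSet"
begin

text \<open>A binary join query: a finite set E of relation symbols of type 'r; each symbol
  r has an ordered pair of attributes att r = (X, Y) of type 'v (required distinct).
  An instance D assigns to each symbol a set of tuples, tuples being pairs of values
  (first component = value of the first attribute, second = value of the second).\<close>

definition attrs :: "('r \<Rightarrow> 'v \<times> 'v) \<Rightarrow> 'r \<Rightarrow> 'v set" where
  "attrs att r = {fst (att r), snd (att r)}"

definition qvars :: "('r \<Rightarrow> 'v \<times> 'v) \<Rightarrow> 'r set \<Rightarrow> 'v set" where
  "qvars att E = (\<Union>r\<in>E. attrs att r)"

definition tval :: "('r \<Rightarrow> 'v \<times> 'v) \<Rightarrow> 'r \<Rightarrow> 'v \<Rightarrow> 'd \<times> 'd \<Rightarrow> 'd" where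
  "tval att r X t = (if X = fst (att r) then fst t else snd t)"

definition degree :: "('r \<Rightarrow> 'v \<times> 'v) \<Rightarrow> ('r \<Rightarrow> ('d \<times> 'd) set) \<Rightarrow> 'r \<Rightarrow> 'v \<Rightarrow> 'd \<Rightarrow> nat" where
  "degree att D r X a = card {t \<in> D r. tval att r X t = a}"

definition light :: "('r \<Rightarrow> 'v \<times> 'v) \<Rightarrow> ('r \<Rightarrow> ('d \<times> 'd) set) \<Rightarrow> real \<Rightarrow> 'r \<Rightarrow> 'v \<Rightarrow> bool" where
  "light att D N r X \<longleftrightarrow> (\<forall>a. real (degree att D r X a) \<le> sqrt N)"

text \<open>Natural join of the relations in a set F of symbols: tuples over the attribute set
  W = union of attributes of F, represented as functions extensional on W.\<close>
definition njoin :: "('r \<Rightarrow> 'v \<times> 'v) \<Rightarrow> ('r \<Rightarrow> ('d \<times> 'd) set) \<Rightarrow> 'r set \<Rightarrow> ('v \<Rightarrow> 'd) set" where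
  "njoin att D F = {f. f \<in> extensional (\<Union>r\<in>F. attrs att r) \<and>
      (\<forall>r\<in>F. (f (fst (att r)), f (snd (att r))) \<in> D r)}"

definition frac_packing :: "('r \<Rightarrow> 'v \<times> 'v) \<Rightarrow> 'r set \<Rightarrow> ('v \<Rightarrow> real) \<Rightarrow> bool" where
  "frac_packing att E u \<longleftrightarrow>
     (\<forall>x\<in>qvars att E. 0 \<le> u x \<and> u x \<le> 1) \<and>
     (\<forall>r\<in>E. u (fst (att r)) + u (snd (att r)) \<le> 1)"

text \<open>AGM(Q) = max over fractional vertex packings u of N^(sum of u); the maximum is
  attained (compact polytope), so it equals the supremum.\<close>
definition AGM :: "('r \<Rightarrow> 'v \<times> 'v) \<Rightarrow> 'r set \<Rightarrow> real \<Rightarrow> real" where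
  "AGM att E N = Sup {N powr (\<Sum>x\<in>qvars att E. u x) | u. frac_packing att E u}"

end

theory Submission imports Defs begin

definition agr :: "'v set \<Rightarrow> ('v \<Rightarrow> 'd) \<Rightarrow> ('v \<Rightarrow> 'd) \<Rightarrow> bool" where
  "agr S g f \<longleftrightarrow> (\<forall>x\<in>S. g x = f x)"

definition cls :: "('v \<Rightarrow> 'd) set \<Rightarrow> 'v set \<Rightarrow> ('v \<Rightarrow> 'd) \<Rightarrow> ('v \<Rightarrow> 'd) set" where
  "cls T S f = {g\<in>T. agr S g f}"

definition cnt :: "('v \<Rightarrow> 'd) set \<Rightarrow> 'v set \<Rightarrow> ('v \<Rightarrow> 'd) \<Rightarrow> real" where
  "cnt T S f = real (card (cls T S f))"

definition GG :: "('v \<Rightarrow> 'd) set \<Rightarrow> 'v set \<Rightarrow> real" where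
  "GG T S = (\<Sum>f\<in>T. ln (cnt T S f))"

lemma agr_sym: "agr S g f \<longleftrightarrow> agr S f g" by (auto simp: agr_def)
lemma agr_trans: "agr S g f \<Longrightarrow> agr S f h \<Longrightarrow> agr S g h" by (auto simp: agr_def)
lemma agr_mono: "agr A g f \<Longrightarrow> B \<subseteq> A \<Longrightarrow> agr B g f" by (auto simp: agr_def)
lemma agr_refl[simp]: "agr S f f" by (auto simp: agr_def)

lemma cnt_ge1: "finite T \<Longrightarrow> f \<in> T \<Longrightarrow> cnt T S f \<ge> 1"
proof -
  assume "finite T" "f \<in> T"
  then have "f \<in> cls T S f" "finite (cls T S f)" by (auto simp: cls_def)
  then have "card (cls T S f) \<ge> 1" by (metis One_nat_def Suc_leI card_gt_0_iff empty_iff)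
  then show ?thesis by (simp add: cnt_def)
qed

lemma cnt_mono: "finite T \<Longrightarrow> B \<subseteq> A \<Longrightarrow> cnt T A f \<le> cnt T B f"
  unfolding cnt_def by (auto intro!: card_mono simp: cls_def agr_def)

lemma cls_eq: "g \<in> cls T S f \<Longrightarrow> cls T S g = cls T S f"
  unfolding cls_def by (auto intro: agr_trans simp: agr_sym)

lemma swap_cls:
  assumes "finite T"
  shows "(\<Sum>f\<in>T. \<Sum>g\<in>cls T S f. w g) = (\<Sum>g\<in>T. w g * cnt T S g)"
proof -
  have "(\<Sum>f\<in>T. \<Sum>g\<in>cls T S f. w g) = (\<Sum>f\<in>T. \<Sum>g\<in>{g. g\<in>T \<and> agr S g f}. w g)"
    by (simp add: cls_def)
  also have "\<dots> = (\<Sum>g\<in>T. \<Sum>f\<in>{f. f\<in>T \<and> agr S g f}. w g)"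
    using sum.swap_restrict[OF assms assms, of "\<lambda>f g. w g" "\<lambda>f g. agr S g f"] by simp
  also have "\<dots> = (\<Sum>g\<in>T. w g * cnt T S g)"
    by (simp add: cnt_def cls_def agr_sym mult.commute)
  finally show ?thesis .
qed

lemma fiber_count:
  assumes "finite K"
  shows "(\<Sum>g\<in>K. 1 / real (card {g'\<in>K. \<phi> g' = \<phi> g})) = real (card (\<phi> ` K))"
proof -
  have "(\<Sum>g\<in>K. 1 / real (card {g'\<in>K. \<phi> g' = \<phi> g}))
     = (\<Sum>y\<in>\<phi> ` K. \<Sum>g\<in>{x. x \<in> K \<and> \<phi> x = y}. 1 / real (card {g'\<in>K. \<phi> g' = \<phi> g}))"
    by (rule sum.image_gen[OF assms])
  also have "\<dots> = (\<Sum>y\<in>\<phi> ` K. 1)"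
  proof (rule sum.cong[OF refl])
    fix y assume "y \<in> \<phi> ` K"
    then have ne: "{x. x \<in> K \<and> \<phi> x = y} \<noteq> {}" by auto
    have fin: "finite {x. x \<in> K \<and> \<phi> x = y}" using assms by auto
    have "(\<Sum>g\<in>{x. x \<in> K \<and> \<phi> x = y}. 1 / real (card {g'\<in>K. \<phi> g' = \<phi> g}))
        = (\<Sum>g\<in>{x. x \<in> K \<and> \<phi> x = y}. 1 / real (card {x. x \<in> K \<and> \<phi> x = y}))"
      by (rule sum.cong) auto
    also have "\<dots> = 1" using ne fin by simp
    finally show "(\<Sum>g\<in>{x. x \<in> K \<and> \<phi> x = y}. 1 / real (card {g'\<in>K. \<phi> g' = \<phi> g})) = 1" .
  qed
  finally show ?thesis by simp
qed

lemma ln_le_minus1: "(x::real) > 0 \<Longrightarrow> ln x \<le> x - 1"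
  using ln_le_minus_one by simp

lemma restrict_eq_agr: "(restrict g A = restrict g' A) \<longleftrightarrow> agr A g g'"
  by (auto simp: agr_def restrict_def fun_eq_iff)

lemma cls_sub: "finite T \<Longrightarrow> B \<subseteq> A \<Longrightarrow> g \<in> cls T B f \<Longrightarrow>
   cls T A g = {g'\<in>cls T B f. restrict g' A = restrict g A}"
  unfolding cls_def restrict_eq_agr by (auto intro: agr_trans agr_mono simp: agr_sym)

lemma L2:
  assumes fin: "finite T" and BA: "B \<subseteq> A" and d: "d > 0"
    and bnd: "\<forall>f\<in>T. real (card ((\<lambda>g. restrict g A) ` cls T B f)) \<le> d"
  shows "GG T B - GG T A \<le> real (card T) * ln d"
proof -
  have pos: "\<And>f S. f \<in> T \<Longrightarrow> cnt T S f > 0" using cnt_ge1[OF fin] by (meson less_le_trans zero_less_one)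
  have step: "ln (cnt T B f) - ln (cnt T A f) \<le> cnt T B f / (d * cnt T A f) - 1 + ln d" if "f \<in> T" for f
  proof -
    have "ln (cnt T B f / (d * cnt T A f)) \<le> cnt T B f / (d * cnt T A f) - 1"
      by (rule ln_le_minus1) (use pos[OF that] d in simp)
    moreover have "ln (cnt T B f / (d * cnt T A f)) = ln (cnt T B f) - ln (cnt T A f) - ln d"
      using pos[OF that, of A] pos[OF that, of B] d by (simp add: ln_div ln_mult)
    ultimately show ?thesis by simp
  qed
  have "GG T B - GG T A = (\<Sum>f\<in>T. ln (cnt T B f) - ln (cnt T A f))"
    by (simp add: GG_def sum_subtractf)
  also have "\<dots> \<le> (\<Sum>f\<in>T. cnt T B f / (d * cnt T A f) - 1 + ln d)"
    by (rule sum_mono) (use step in auto)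
  also have "\<dots> = (1/d) * (\<Sum>g\<in>T. (1 / cnt T A g) * cnt T B g) - real (card T) + real (card T) * ln d"
    by (simp add: sum.distrib sum_subtractf sum_distrib_left)
  also have "(\<Sum>g\<in>T. (1 / cnt T A g) * cnt T B g) = (\<Sum>f\<in>T. \<Sum>g\<in>cls T B f. 1 / cnt T A g)"
    using swap_cls[OF fin, of "\<lambda>g. 1 / cnt T A g" B] by simp
  also have "\<dots> \<le> (\<Sum>f\<in>T. d)"
  proof (rule sum_mono)
    fix f assume f: "f \<in> T"
    have finK: "finite (cls T B f)" using fin by (simp add: cls_def)
    have "(\<Sum>g\<in>cls T B f. 1 / cnt T A g)
       = (\<Sum>g\<in>cls T B f. 1 / real (card {g'\<in>cls T B f. restrict g' A = restrict g A}))"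
      by (rule sum.cong) (auto simp: cnt_def cls_sub[OF fin BA])
    also have "\<dots> = real (card ((\<lambda>g. restrict g A) ` cls T B f))"
      by (rule fiber_count[OF finK])
    also have "\<dots> \<le> d" using bnd f by blast
    finally show "(\<Sum>g\<in>cls T B f. 1 / cnt T A g) \<le> d" .
  qed
  finally show ?thesis using d by (simp add: field_simps)
qed

lemma L1_inner:
  assumes fin: "finite T" and BA: "B \<subseteq> A" and f: "f \<in> T"
  shows "(\<Sum>g\<in>cls T A f. cnt T (insert v B) g / cnt T (insert v A) g) \<le> cnt T B f"
proof -
  let ?K = "cls T A f"
  have finK: "finite ?K" using fin by (simp add: cls_def)
  have KT: "?K \<subseteq> T" by (auto simp: cls_def)
  have "(\<Sum>g\<in>?K. cnt T (insert v B) g / cnt T (insert v A) g)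
      = (\<Sum>g\<in>?K. \<Sum>h\<in>{h. h \<in> T \<and> agr (insert v B) h g}. 1 / cnt T (insert v A) g)"
    by (simp add: cnt_def cls_def)
  also have "\<dots> = (\<Sum>h\<in>T. \<Sum>g\<in>{g. g \<in> ?K \<and> agr (insert v B) h g}. 1 / cnt T (insert v A) g)"
    using sum.swap_restrict[OF finK fin, of "\<lambda>g h. 1 / cnt T (insert v A) g" "\<lambda>g h. agr (insert v B) h g"]
    by simp
  also have "\<dots> \<le> (\<Sum>h\<in>T. if agr B h f then 1 else 0)"
  proof (rule sum_mono)
    fix h assume h: "h \<in> T"
    let ?S = "{g. g \<in> ?K \<and> agr (insert v B) h g}"
    show "(\<Sum>g\<in>?S. 1 / cnt T (insert v A) g) \<le> (if agr B h f then 1 else 0)"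
    proof (cases "?S = {}")
      case True then show ?thesis by (simp only: sum.empty) simp
    next
      case False
      then obtain g0 where g0: "g0 \<in> ?S" by blast
      have hf: "agr B h f" using g0 BA by (auto simp: cls_def agr_def)
      have finS: "finite ?S" using finK by simp
      have eq: "cls T (insert v A) g = ?S" if "g \<in> ?S" for g
        using that BA unfolding cls_def agr_def by auto
      have "(\<Sum>g\<in>?S. 1 / cnt T (insert v A) g) = (\<Sum>g\<in>?S. 1 / real (card ?S))"
        by (rule sum.cong) (auto simp: cnt_def eq)
      also have "\<dots> = 1" using False finS by simp
      finally show ?thesis using hf by simp
    qed
  qed
  also have "\<dots> = cnt T B f"
    using fin by (simp add: cnt_def cls_def sum.If_cases Int_def conj_commute)
  finally show ?thesis .
qed

lemma L1:
  assumes fin: "finite T" and BA: "B \<subseteq> A"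
  shows "GG T A - GG T (insert v A) \<le> GG T B - GG T (insert v B)"
proof -
  have pos: "\<And>f S. f \<in> T \<Longrightarrow> cnt T S f > 0" using cnt_ge1[OF fin] by (meson less_le_trans zero_less_one)
  define W where "W g = cnt T (insert v B) g / (cnt T (insert v A) g * cnt T B g)" for g
  have step: "ln (cnt T A f) - ln (cnt T (insert v A) f) - (ln (cnt T B f) - ln (cnt T (insert v B) f))
      \<le> W f * cnt T A f - 1" if "f \<in> T" for f
  proof -
    have "ln (W f * cnt T A f) \<le> W f * cnt T A f - 1"
      by (rule ln_le_minus1) (use pos[OF that] in \<open>simp add: W_def\<close>)
    moreover have "ln (W f * cnt T A f) = ln (cnt T A f) - ln (cnt T (insert v A) f) - (ln (cnt T B f) - ln (cnt T (insert v B) f))"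
      using pos[OF that, of A] pos[OF that, of B] pos[OF that, of "insert v A"] pos[OF that, of "insert v B"]
      by (simp add: W_def ln_div ln_mult)
    ultimately show ?thesis by simp
  qed
  have "GG T A - GG T (insert v A) - (GG T B - GG T (insert v B))
      = (\<Sum>f\<in>T. ln (cnt T A f) - ln (cnt T (insert v A) f) - (ln (cnt T B f) - ln (cnt T (insert v B) f)))"
    by (simp add: GG_def sum_subtractf)
  also have "\<dots> \<le> (\<Sum>f\<in>T. W f * cnt T A f - 1)"
    by (rule sum_mono) (use step in auto)
  also have "\<dots> = (\<Sum>f\<in>T. W f * cnt T A f) - real (card T)"
    by (simp add: sum_subtractf)
  also have "(\<Sum>f\<in>T. W f * cnt T A f) = (\<Sum>f\<in>T. \<Sum>g\<in>cls T A f. W g)"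
    using swap_cls[OF fin, of W A] by simp
  also have "\<dots> \<le> (\<Sum>f\<in>T. 1)"
  proof (rule sum_mono)
    fix f assume f: "f \<in> T"
    have "(\<Sum>g\<in>cls T A f. W g) = (\<Sum>g\<in>cls T A f. cnt T (insert v B) g / cnt T (insert v A) g) / cnt T B f"
    proof -
      have "(\<Sum>g\<in>cls T A f. W g) = (\<Sum>g\<in>cls T A f. (cnt T (insert v B) g / cnt T (insert v A) g) / cnt T B f)"
      proof (rule sum.cong[OF refl])
        fix g assume g: "g \<in> cls T A f"
        then have "g \<in> cls T B f" using BA by (auto simp: cls_def intro: agr_mono)
        then have "cnt T B g = cnt T B f" by (simp add: cnt_def cls_eq)
        then show "W g = (cnt T (insert v B) g / cnt T (insert v A) g) / cnt T B f" by (simp add: W_def)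
      qed
      then show ?thesis by (simp add: sum_divide_distrib)
    qed
    also have "\<dots> \<le> 1"
      using L1_inner[OF fin BA f, of v] pos[OF f, of B] by simp
    finally show "(\<Sum>g\<in>cls T A f. W g) \<le> 1" .
  qed
  finally show ?thesis by simp
qed


lemma GG_empty: "finite T \<Longrightarrow> GG T {} = real (card T) * ln (real (card T))"
  by (simp add: GG_def cnt_def cls_def agr_def)

lemma GG_full: assumes "T \<subseteq> extensional V" shows "GG T V = 0"
proof -
  have "cls T V f = {f}" if "f \<in> T" for f
    using that assms unfolding cls_def agr_def by (auto intro: extensionalityI)
  then show ?thesis by (simp add: GG_def cnt_def)
qed

lemma e_nonneg: "finite T \<Longrightarrow> GG T A - GG T (insert v A) \<ge> 0"
proof -
  assume fin: "finite T"
  have "ln (cnt T (insert v A) f) \<le> ln (cnt T A f)" if "f \<in> T" for f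
    using cnt_ge1[OF fin that, of "insert v A"] cnt_mono[OF fin, of A "insert v A" f]
    by (subst ln_le_cancel_iff) (auto simp: subset_insertI)
  then show ?thesis unfolding GG_def by (simp add: sum_mono)
qed

lemma card_restrict_le:
  assumes "finite Dr" "\<forall>g\<in>K. (g a, g b) \<in> Dr"
  shows "card ((\<lambda>g. restrict g {a,b}) ` K) \<le> card Dr"
proof (rule card_inj_on_le[where f="\<lambda>h. (h a, h b)"])
  show "inj_on (\<lambda>h. (h a, h b)) ((\<lambda>g. restrict g {a, b}) ` K)"
    by (auto simp: inj_on_def restrict_def fun_eq_iff)
  show "(\<lambda>h. (h a, h b)) ` (\<lambda>g. restrict g {a, b}) ` K \<subseteq> Dr" using assms(2) by auto
qed (use assms in auto)

lemma AGM_upper: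
  assumes fin: "finite E" and N1: "N \<ge> 1" and fp: "frac_packing att E u"
  shows "N powr (\<Sum>x\<in>qvars att E. u x) \<le> AGM att E N"
proof -
  have finV: "finite (qvars att E)" using fin by (simp add: qvars_def attrs_def)
  have bdd: "bdd_above {N powr (\<Sum>x\<in>qvars att E. u x) | u. frac_packing att E u}"
  proof (rule bdd_aboveI)
    fix y assume "y \<in> {N powr (\<Sum>x\<in>qvars att E. u x) | u. frac_packing att E u}"
    then obtain w where y: "y = N powr (\<Sum>x\<in>qvars att E. w x)" and w: "frac_packing att E w" by auto
    have "(\<Sum>x\<in>qvars att E. w x) \<le> (\<Sum>x\<in>qvars att E. 1)"
      by (rule sum_mono) (use w in \<open>auto simp: frac_packing_def\<close>)
    then show "y \<le> N powr real (card (qvars att E))" unfolding y using N1 by (simp add: powr_mono)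
  qed
  show ?thesis unfolding AGM_def by (rule cSup_upper[OF _ bdd]) (use fp in auto)
qed

lemma packing_from_e:
  fixes e :: "'v \<Rightarrow> real"
  assumes fin: "finite E" and N1: "N \<ge> 1" and n2: "n \<ge> (2::nat)"
    and enn: "\<forall>v\<in>qvars att E. e v \<ge> 0"
    and esum: "(\<Sum>v\<in>qvars att E. e v) = real n * ln (real n)"
    and epair: "\<forall>r\<in>E. e (fst (att r)) + e (snd (att r)) \<le> real n * ln N"
  shows "real n \<le> AGM att E N"
proof -
  let ?V = "qvars att E"
  have inV: "fst (att r) \<in> ?V" "snd (att r) \<in> ?V" if "r \<in> E" for r
    using that by (auto simp: qvars_def attrs_def)
  have edge: "\<exists>r\<in>E. \<exists>w. e v + e w \<le> real n * ln N \<and> w \<in> ?V" if "v \<in> ?V" for v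
  proof -
    from that obtain r where r: "r \<in> E" "v \<in> attrs att r" by (auto simp: qvars_def)
    then have "v = fst (att r) \<or> v = snd (att r)" by (auto simp: attrs_def)
    have m: "e (fst (att r)) + e (snd (att r)) \<le> real n * ln N" using epair r(1) by blast
    from \<open>v = fst (att r) \<or> v = snd (att r)\<close> show ?thesis
    proof
      assume "v = fst (att r)" then show ?thesis using r(1) inV[OF r(1)] m by blast
    next
      assume v: "v = snd (att r)"
      have "e v + e (fst (att r)) \<le> real n * ln N" using m unfolding v by linarith
      then show ?thesis using r(1) inV[OF r(1)] by blast
    qed
  qed
  have npos: "real n > 1" using n2 by simp
  have lnN: "ln N > 0"
  proof (rule ccontr)
    assume "\<not> ln N > 0"
    then have "real n * ln N \<le> 0" by (simp add: mult_nonneg_nonpos)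
    have "\<forall>v\<in>?V. e v = 0"
    proof
      fix v assume v: "v \<in> ?V"
      obtain r w where h: "e v + e w \<le> real n * ln N" "w \<in> ?V" using edge[OF v] by blast
      have "e v \<ge> 0" "e w \<ge> 0" using enn v h(2) by auto
      then show "e v = 0" using h(1) \<open>real n * ln N \<le> 0\<close> by linarith
    qed
    then have "(\<Sum>v\<in>?V. e v) = 0" by simp
    moreover have "real n * ln (real n) > 0" using npos by simp
    ultimately show False using esum by linarith
  qed
  define u where "u v = e v / (real n * ln N)" for v
  have den: "real n * ln N > 0" using npos lnN by simp
  have fp: "frac_packing att E u"
    unfolding frac_packing_def
  proof (intro conjI ballI)
    fix r assume "r \<in> E"
    then have "e (fst (att r)) + e (snd (att r)) \<le> real n * ln N" using epair by blast
    then show "u (fst (att r)) + u (snd (att r)) \<le> 1" using den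
      by (simp add: u_def add_divide_distrib[symmetric])
  next
    fix x assume x: "x \<in> ?V"
    show "0 \<le> u x" using enn x den by (simp add: u_def)
    obtain r w where h: "e x + e w \<le> real n * ln N" "w \<in> ?V" using edge[OF x] by blast
    have "e w \<ge> 0" using enn h(2) by auto
    then have "e x \<le> real n * ln N" using h(1) by linarith
    then show "u x \<le> 1" using den by (simp add: u_def)
  qed
  have "(\<Sum>x\<in>?V. u x) = ln (real n) / ln N"
    using esum den by (simp add: u_def sum_divide_distrib[symmetric])
  then have "N powr (\<Sum>x\<in>?V. u x) = real n"
    using N1 lnN npos by (simp add: powr_def)
  then show ?thesis using AGM_upper[OF fin N1 fp] by simp
qed

theorem mainTheorem5:
  fixes att :: "'r \<Rightarrow> 'v \<times> 'v" and E :: "'r set" and D :: "'r \<Rightarrow> ('d \<times> 'd) set"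
    and N :: real and U :: "'v set"
  assumes finE: "finite E"
    and binary: "\<forall>r\<in>E. fst (att r) \<noteq> snd (att r)"
    and finD: "\<forall>r\<in>E. finite (D r)"
    and sizeN: "\<forall>r\<in>E. real (card (D r)) \<le> N"
    and N1: "N \<ge> 1"
    and Usub: "U \<subset> qvars att E"
    and cover: "\<forall>Y\<in>qvars att E - U. \<exists>r\<in>E. \<exists>X\<in>U. attrs att r = {X, Y}"
    and lightU: "\<forall>r\<in>E. \<forall>X Y. attrs att r = {X, Y} \<and> X \<in> U \<and> Y \<notin> U \<longrightarrow> light att D N r X"
  shows "finite (njoin att D {r\<in>E. attrs att r \<inter> U \<noteq> {}}) \<and>
         real (card (njoin att D {r\<in>E. attrs att r \<inter> U \<noteq> {}})) \<le> AGM att E N"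
proof -
  define F where "F = {r\<in>E. attrs att r \<inter> U \<noteq> {}}"
  define V where "V = qvars att E"
  define T where "T = njoin att D F"
  have FE: "F \<subseteq> E" by (auto simp: F_def)
  have finV: "finite V" using finE by (simp add: V_def qvars_def attrs_def)
  have UV: "U \<subseteq> V" using Usub by (auto simp: V_def)
  have covF: "(\<Union>r\<in>F. attrs att r) = V"
  proof
    show "(\<Union>r\<in>F. attrs att r) \<subseteq> V" using FE by (auto simp: V_def qvars_def)
    show "V \<subseteq> (\<Union>r\<in>F. attrs att r)"
    proof
      fix v assume v: "v \<in> V"
      show "v \<in> (\<Union>r\<in>F. attrs att r)"
      proof (cases "v \<in> U")
        case True
        then obtain r where "r \<in> E" "v \<in> attrs att r" using v by (auto simp: V_def qvars_def)
        then show ?thesis using True by (auto simp: F_def)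
      next
        case False
        have "\<exists>r\<in>E. \<exists>X\<in>U. attrs att r = {X, v}" using cover v False by (simp add: V_def)
        then obtain r X where "r \<in> E" "X \<in> U" "attrs att r = {X, v}" by blast
        then show ?thesis by (auto simp: F_def)
      qed
    qed
  qed
  have Tmem: "f \<in> T \<longleftrightarrow> f \<in> extensional V \<and> (\<forall>r\<in>F. (f (fst (att r)), f (snd (att r))) \<in> D r)" for f
    by (simp add: T_def njoin_def covF)
  define Dom where "Dom = (\<Union>r\<in>F. fst ` D r \<union> snd ` D r)"
  have finF: "finite F" using finE FE finite_subset by blast
  have finDom: "finite Dom" unfolding Dom_def using finF FE finD by blast
  have TPi: "T \<subseteq> PiE V (\<lambda>_. Dom)"
  proof
    fix f assume f: "f \<in> T"
    have "f v \<in> Dom" if vV: "v \<in> V" for v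
    proof -
      obtain r where r: "r \<in> F" "v \<in> attrs att r" using covF vV by blast
      have "(f (fst (att r)), f (snd (att r))) \<in> D r" using f r Tmem by blast
      then show ?thesis using r unfolding Dom_def attrs_def by (auto intro!: rev_image_eqI)
    qed
    then show "f \<in> PiE V (\<lambda>_. Dom)" using f Tmem by (auto simp: PiE_def)
  qed
  have finT: "finite T" by (rule finite_subset[OF TPi]) (simp add: finite_PiE finV finDom)
  have TV: "T \<subseteq> extensional V" using Tmem by blast
  have main: "real (card T) \<le> AGM att E N"
  proof (cases "card T \<le> 1")
    case True
    have fp: "frac_packing att E (\<lambda>_. 0)" by (simp add: frac_packing_def)
    have "N powr (\<Sum>x\<in>qvars att E. (0::real)) \<le> AGM att E N" by (rule AGM_upper[OF finE N1 fp])
    then have "1 \<le> AGM att E N" using N1 by simp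
    then show ?thesis using True by linarith
  next
    case False
    then have n2: "card T \<ge> 2" by simp
    let ?n = "card T"
    obtain xs1 where xs1: "set xs1 = U" "distinct xs1" using finite_distinct_list finite_subset[OF UV finV] by blast
    obtain xs2 where xs2: "set xs2 = V - U" "distinct xs2" using finite_distinct_list finV by (meson finite_Diff)
    define vs where "vs = xs1 @ xs2"
    have dvs: "distinct vs" using xs1 xs2 by (auto simp: vs_def)
    have svs: "set vs = V" using xs1 xs2 UV by (auto simp: vs_def)
    define L where "L = length vs"
    have bij: "bij_betw ((!) vs) {..<L} V" by (rule bij_betw_nth[OF dvs]) (auto simp: L_def svs)
    have inj: "inj_on ((!) vs) {..<L}" using bij by (simp add: bij_betw_def)
    define idx where "idx = the_inv_into {..<L} ((!) vs)"
    have idx1: "idx v < L \<and> vs ! idx v = v" if "v \<in> V" for v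
    proof -
      have "v \<in> (!) vs ` {..<L}" using bij that by (simp add: bij_betw_def)
      then show ?thesis unfolding idx_def
        using f_the_inv_into_f[OF inj] the_inv_into_into[OF inj] by auto
    qed
    have idx2: "idx (vs ! i) = i" if "i < L" for i
      unfolding idx_def using the_inv_into_f_f[OF inj] that by auto
    define Pre where "Pre v = set (take (idx v) vs)" for v
    define e where "e v = GG T (Pre v) - GG T (insert v (Pre v))" for v
    have enn: "\<forall>v\<in>V. e v \<ge> 0" using e_nonneg[OF finT] by (simp add: e_def)
    define \<Phi> where "\<Phi> i = GG T (set (take i vs))" for i
    have esum: "(\<Sum>v\<in>V. e v) = real ?n * ln (real ?n)"
    proof -
      have "(\<Sum>v\<in>V. e v) = (\<Sum>i<L. e (vs ! i))"
        using sum.reindex_bij_betw[OF bij, of e] by simp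
      also have "\<dots> = (\<Sum>i<L. \<Phi> i - \<Phi> (Suc i))"
      proof (rule sum.cong[OF refl])
        fix i assume i: "i \<in> {..<L}"
        then have "insert (vs ! i) (set (take i vs)) = set (take (Suc i) vs)"
          by (simp add: L_def take_Suc_conv_app_nth)
        then show "e (vs ! i) = \<Phi> i - \<Phi> (Suc i)"
          using i idx2 by (simp add: e_def Pre_def \<Phi>_def)
      qed
      also have "\<dots> = \<Phi> 0 - \<Phi> L" by (rule sum_lessThan_telescope')
      also have "\<dots> = GG T {} - GG T V" by (simp add: \<Phi>_def L_def svs)
      also have "\<dots> = real ?n * ln (real ?n)" using GG_empty[OF finT] GG_full[OF TV] by simp
      finally show ?thesis .
    qed
    have ord: "x \<in> Pre y" if "x \<in> V" "y \<in> V" "idx x < idx y" for x y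
    proof -
      have "idx x < length (take (idx y) vs)" using that idx1[OF that(2)] by (simp add: L_def)
      then have "take (idx y) vs ! idx x \<in> set (take (idx y) vs)" by (rule nth_mem)
      then show ?thesis using that idx1[OF that(1)] by (simp add: Pre_def)
    qed
    have ordU: "idx x < idx y" if "x \<in> U" "y \<in> V - U" for x y
    proof -
      have xV: "x \<in> V" using that UV by blast
      have yV: "y \<in> V" using that by blast
      have "idx x < length xs1"
      proof (rule ccontr)
        assume "\<not> idx x < length xs1"
        then have "vs ! idx x = xs2 ! (idx x - length xs1)" by (simp add: vs_def nth_append)
        moreover have "idx x - length xs1 < length xs2" using idx1[OF xV] \<open>\<not> idx x < length xs1\<close>
          by (simp add: L_def vs_def) linarith
        ultimately have "x \<in> set xs2" using idx1[OF xV] by (metis nth_mem)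
        then show False using xs2 that by auto
      qed
      moreover have "idx y \<ge> length xs1"
      proof (rule ccontr)
        assume "\<not> idx y \<ge> length xs1"
        then have "vs ! idx y = xs1 ! idx y" by (simp add: vs_def nth_append)
        then have "y \<in> set xs1" using idx1[OF yV] \<open>\<not> idx y \<ge> length xs1\<close> by (metis not_le nth_mem)
        then show False using xs1 that by auto
      qed
      ultimately show ?thesis by simp
    qed
    have esub: "e v \<le> GG T B - GG T (insert v B)" if "B \<subseteq> Pre v" for v B
      unfolding e_def by (rule L1[OF finT that])
    have Npos: "N > 0" using N1 by simp
    have eedge: "GG T {} - GG T {fst (att r), snd (att r)} \<le> real ?n * ln N" if r: "r \<in> F" for r
    proof (rule L2[OF finT _ Npos])
      show "\<forall>f\<in>T. real (card ((\<lambda>g. restrict g {fst (att r), snd (att r)}) ` cls T {} f)) \<le> N"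
      proof
        fix f assume "f \<in> T"
        have "cls T {} f = T" by (simp add: cls_def agr_def)
        moreover have "card ((\<lambda>g. restrict g {fst (att r), snd (att r)}) ` T) \<le> card (D r)"
          by (rule card_restrict_le) (use r finD FE Tmem in auto)
        ultimately show "real (card ((\<lambda>g. restrict g {fst (att r), snd (att r)}) ` cls T {} f)) \<le> N"
          using sizeN r FE by (metis (no_types, lifting) in_mono of_nat_le_iff order_trans)
      qed
    qed simp
    have elight: "e y \<le> real ?n * (ln N / 2)" if y: "y \<in> V - U" for y
    proof -
      have "\<exists>r\<in>E. \<exists>X\<in>U. attrs att r = {X, y}" using cover y by (simp add: V_def)
      then obtain r X where r: "r \<in> E" "X \<in> U" "attrs att r = {X, y}" by blast
      have rF: "r \<in> F" using r by (auto simp: F_def)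
      have yU: "y \<notin> U" using y by blast
      have lt: "light att D N r X" using lightU r yU by blast
      have XV: "X \<in> V" using r UV by blast
      have "{X} \<subseteq> Pre y" using ord[OF XV _ ordU[OF r(2) y]] y by auto
      then have "e y \<le> GG T {X} - GG T (insert y {X})" by (rule esub)
      also have "\<dots> \<le> real ?n * ln (sqrt N)"
      proof (rule L2[OF finT _ ])
        show "sqrt N > 0" using Npos by simp
        show "\<forall>f\<in>T. real (card ((\<lambda>g. restrict g (insert y {X})) ` cls T {X} f)) \<le> sqrt N"
        proof
          fix f assume f: "f \<in> T"
          let ?a = "fst (att r)" and ?b = "snd (att r)"
          have ab: "insert y {X} = {?a, ?b}" using r(3) by (auto simp: attrs_def)
          have Xab: "X = ?a \<or> X = ?b" using r(3) by (auto simp: attrs_def doubleton_eq_iff)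
          have "card ((\<lambda>g. restrict g {?a, ?b}) ` cls T {X} f) \<le> card {t\<in>D r. tval att r X t = f X}"
          proof (rule card_restrict_le)
            show "finite {t\<in>D r. tval att r X t = f X}" using finD r by simp
            show "\<forall>g\<in>cls T {X} f. (g ?a, g ?b) \<in> {t\<in>D r. tval att r X t = f X}"
            proof
              fix g assume g: "g \<in> cls T {X} f"
              then have gT: "g \<in> T" and gX: "g X = f X" by (auto simp: cls_def agr_def)
              have "(g ?a, g ?b) \<in> D r" using gT rF Tmem by blast
              moreover have "tval att r X (g ?a, g ?b) = f X"
                using Xab gX by (auto simp: tval_def)
              ultimately show "(g ?a, g ?b) \<in> {t\<in>D r. tval att r X t = f X}" by simp
            qed
          qed
          also have "\<dots> = degree att D r X (f X)" by (simp add: degree_def)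
          finally have "real (card ((\<lambda>g. restrict g {?a, ?b}) ` cls T {X} f)) \<le> real (degree att D r X (f X))"
            by simp
          also have "\<dots> \<le> sqrt N" using lt by (simp add: light_def)
          finally show "real (card ((\<lambda>g. restrict g (insert y {X})) ` cls T {X} f)) \<le> sqrt N"
            by (simp only: ab)
        qed
      qed auto
      also have "ln (sqrt N) = ln N / 2" using Npos by (simp add: ln_sqrt)
      finally show ?thesis .
    qed
    have epF: "e p + e q \<le> real ?n * ln N"
      if r: "r \<in> F" and pq: "{p, q} = {fst (att r), snd (att r)}" and pV: "p \<in> V" and qV: "q \<in> V"
        and lt: "idx p < idx q" for r p q
    proof -
      have "e p \<le> GG T {} - GG T (insert p {})" by (rule esub) simp
      moreover have "{p} \<subseteq> Pre q" using ord[OF pV qV lt] by simp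
      then have "e q \<le> GG T {p} - GG T (insert q {p})" by (rule esub)
      moreover have "insert q {p} = {fst (att r), snd (att r)}" using pq by auto
      ultimately show ?thesis using eedge[OF r] by simp
    qed
    have epair: "\<forall>r\<in>E. e (fst (att r)) + e (snd (att r)) \<le> real ?n * ln N"
    proof
      fix r assume r: "r \<in> E"
      let ?a = "fst (att r)" and ?b = "snd (att r)"
      have aV: "?a \<in> V" and bV: "?b \<in> V" using r by (auto simp: V_def qvars_def attrs_def)
      show "e ?a + e ?b \<le> real ?n * ln N"
      proof (cases "r \<in> F")
        case True
        have "idx ?a \<noteq> idx ?b" using idx1[OF aV] idx1[OF bV] binary r by metis
        then consider "idx ?a < idx ?b" | "idx ?b < idx ?a" by linarith
        then show ?thesis
        proof cases
          case 1 then show ?thesis using epF[OF True _ aV bV] by simp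
        next
          case 2 then have "e ?b + e ?a \<le> real ?n * ln N" using epF[OF True _ bV aV] by (simp add: insert_commute)
          then show ?thesis by simp
        qed
      next
        case False
        then have "?a \<notin> U" "?b \<notin> U" using r by (auto simp: F_def attrs_def)
        then have "e ?a \<le> real ?n * (ln N / 2)" "e ?b \<le> real ?n * (ln N / 2)"
          using elight aV bV by auto
        then show ?thesis by (simp add: field_simps)
      qed
    qed
    show ?thesis
      by (rule packing_from_e[OF finE N1 n2, where e=e]) (use enn esum epair in \<open>simp_all add: V_def\<close>)
  qed
  show ?thesis using finT main by (simp add: T_def F_def)
qed

end
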